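(* $\displaystyle\min_{\underline y\in\mathcal F}\sum_{j\in\tilde R}c_jy_j=\min_{\underline x\in\mathcal F_0}\sum_{j\in\tilde R}c_jx_j$. That is, the optimum value of the node-cut integer linear program equals the optimum cost of the multi-sink relay placement problem with hop bound $h_{\max}$.
   Context: Let $G=(V,E)$ be a finite undirected graph with $V=Q\cup R\cup B$ (pairwise disjoint), where $Q$ is the set of sources, $R$ the set of potential relay locations and $B$ the set of potential sink locations; let $h_{\max}$ be a positive integer and $c_s,c_r\ge0$. Form the augmented graph $\tilde G=(\tilde V,\tilde E)$ with $\tilde V=V\cup\{0\}$, where $0$ is a new vertex (virtual sink), and $\tilde E=E\cup\{\{0,b\}:b\in B\}$. Let $\tilde R=R\cup B$ with node costs $c_j=c_r$ for $j\in R$ and $c_j=c_s$ for $j\in B$. For a source $k\in Q$, a node cut for $k$ is a set $\gamma\subseteq\tilde V\setminus\{k,0\}$ whose deletion disconnects $k$ from $0$ in $\tilde G$; it is minimal if no proper subset is a node cut; $\Gamma^k$ denotes the set of minimal node cuts for $k$. A vector $\underline y=((y_{j,k})_{k\in Q,\,j\in\tilde V\setminus\{k,0\}},(y_j)_{j\in\tilde R})$ belongs to $\mathcal F$ (the feasible set of the ILP minimizing $\sum_{j\in\tilde R}c_jy_j$) iff: (i) $\sum_{j\in\gamma}y_{j,k}\ge1$ for all $\gamma\in\Gamma^k$, $k\in Q$; (ii) $y_j\ge y_{j,k}$ for all $j\in\tilde R$, $k\in Q$; (iii) $\sum_{j\in\tilde V\setminus\{k,0\}}y_{j,k}\le h_{\max}$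 for all $k\in Q$; (iv) all $y_{j,k},y_j\in\{0,1\}$. For $k\in Q$ let $\mathcal P'_k$ be the set of paths in $\tilde G$ from $k$ to $0$ with at most $h_{\max}+1$ edges, and let $\mathcal U_0$ be the set of tuples $\underline g=(p_k)_{k\in Q}$ with $p_k\in\mathcal P'_k$. For $\underline g\in\mathcal U_0$ define $\underline x(\underline g)$ by $x_{j,k}=1$ if $j$ is a vertex of $p_k$ and $0$ otherwise ($k\in Q$, $j\in\tilde V\setminus\{k,0\}$), and $x_j=1$ if $x_{j,k}=1$ for some $k\in Q$ and $0$ otherwise ($j\in\tilde R$). Let $\mathcal F_0=\{\underline x(\underline g):\underline g\in\mathcal U_0\}$; the minimum cost over $\mathcal F_0$ is the optimum cost of selecting sinks (cost $c_s$ each) and relays (cost $c_r$ each) so that every source has a path of at most $h_{\max}$ hops to a selected sink. A minimum over an empty set is taken to be $+\infty$. *)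

theory Defs
  imports Complex_Main "HOL-Library.Extended_Real"
begin

text \<open>Augmented graph: the virtual sink 0 is None, an original vertex v is Some v.\<close>

definition aug_V :: "'v set \<Rightarrow> 'v option set" where
  "aug_V V = Some ` V \<union> {None}"

definition aug_E :: "'v set set \<Rightarrow> 'v set \<Rightarrow> 'v option set set" where
  "aug_E E B = (\<lambda>e. Some ` e) ` E \<union> {{None, Some b} | b. b \<in> B}"

definition aug_R :: "'v set \<Rightarrow> 'v set \<Rightarrow> 'v option set" where
  "aug_R R B = Some ` (R \<union> B)"

definition node_cost :: "'v set \<Rightarrow> real \<Rightarrow> real \<Rightarrow> 'v option \<Rightarrow> real" where
  "node_cost R cs cr j = (if j \<in> Some ` R then cr else cs)"

definition connected_in :: "'a set set \<Rightarrow> 'a set \<Rightarrow> 'a \<Rightarrow> 'a \<Rightarrow> bool" where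
  "connected_in Ed W a b \<longleftrightarrow> a \<in> W \<and> b \<in> W \<and>
     (a, b) \<in> {(u, v). u \<in> W \<and> v \<in> W \<and> {u, v} \<in> Ed}\<^sup>*"

definition is_node_cut :: "'v set \<Rightarrow> 'v set set \<Rightarrow> 'v set \<Rightarrow> 'v \<Rightarrow> 'v option set \<Rightarrow> bool" where
  "is_node_cut V E B k \<gamma> \<longleftrightarrow>
     \<gamma> \<subseteq> aug_V V - {Some k, None} \<and>
     \<not> connected_in (aug_E E B) (aug_V V - \<gamma>) (Some k) None"

definition min_node_cuts :: "'v set \<Rightarrow> 'v set set \<Rightarrow> 'v set \<Rightarrow> 'v \<Rightarrow> 'v option set set" where
  "min_node_cuts V E B k =
     {\<gamma>. is_node_cut V E B k \<gamma> \<and> (\<forall>\<gamma>'. \<gamma>' \<subset> \<gamma> \<longrightarrow> \<not> is_node_cut V E B k \<gamma>')}"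

text \<open>Feasible set F of the node-cut ILP.  A vector is a pair (yk, yv) with
  yk k j = y_{j,k} (k in Q, j in V~ - {k,0}) and yv j = y_j (j in R~);
  entries outside these index sets are fixed to 0.\<close>

definition ILP_feasible ::
  "'v set \<Rightarrow> 'v set \<Rightarrow> 'v set \<Rightarrow> 'v set \<Rightarrow> 'v set set \<Rightarrow> nat \<Rightarrow>
   (('v \<Rightarrow> 'v option \<Rightarrow> real) \<times> ('v option \<Rightarrow> real)) set" where
  "ILP_feasible V Q R B E h =
     {(yk, yv).
        (\<forall>k j. \<not> (k \<in> Q \<and> j \<in> aug_V V - {Some k, None}) \<longrightarrow> yk k j = 0) \<and>
        (\<forall>j. j \<notin> aug_R R B \<longrightarrow> yv j = 0) \<and>
        (\<forall>k\<in>Q. \<forall>\<gamma>\<in>min_node_cuts V E B k. (\<Sum>j\<in>\<gamma>. yk k j) \<ge> 1) \<and>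
        (\<forall>j\<in>aug_R R B. \<forall>k\<in>Q. yv j \<ge> yk k j) \<and>
        (\<forall>k\<in>Q. (\<Sum>j\<in>aug_V V - {Some k, None}. yk k j) \<le> real h) \<and>
        (\<forall>k\<in>Q. \<forall>j\<in>aug_V V - {Some k, None}. yk k j \<in> {0, 1}) \<and>
        (\<forall>j\<in>aug_R R B. yv j \<in> {0, 1})}"

definition is_path :: "'a set \<Rightarrow> 'a set set \<Rightarrow> 'a list \<Rightarrow> 'a \<Rightarrow> 'a \<Rightarrow> bool" where
  "is_path W Ed p a b \<longleftrightarrow> p \<noteq> [] \<and> hd p = a \<and> last p = b \<and> distinct p \<and>
     set p \<subseteq> W \<and> (\<forall>i. Suc i < length p \<longrightarrow> {p ! i, p ! Suc i} \<in> Ed)"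

definition hop_paths :: "'v set \<Rightarrow> 'v set set \<Rightarrow> 'v set \<Rightarrow> nat \<Rightarrow> 'v \<Rightarrow> 'v option list set" where
  "hop_paths V E B h k =
     {p. is_path (aug_V V) (aug_E E B) p (Some k) None \<and> length p - 1 \<le> h + 1}"

definition path_tuples :: "'v set \<Rightarrow> 'v set \<Rightarrow> 'v set \<Rightarrow> 'v set set \<Rightarrow> nat \<Rightarrow> ('v \<Rightarrow> 'v option list) set" where
  "path_tuples V Q B E h = {g. \<forall>k\<in>Q. g k \<in> hop_paths V E B h k}"

definition x_of ::
  "'v set \<Rightarrow> 'v set \<Rightarrow> 'v set \<Rightarrow> 'v set \<Rightarrow> ('v \<Rightarrow> 'v option list) \<Rightarrow>
   ('v \<Rightarrow> 'v option \<Rightarrow> real) \<times> ('v option \<Rightarrow> real)" where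
  "x_of V Q R B g =
     (let xk = (\<lambda>k j. if k \<in> Q \<and> j \<in> aug_V V - {Some k, None} \<and> j \<in> set (g k)
                       then 1 else 0 :: real)
      in (xk, (\<lambda>j. if j \<in> aug_R R B \<and> (\<exists>k\<in>Q. xk k j = 1) then 1 else 0)))"

definition F0 ::
  "'v set \<Rightarrow> 'v set \<Rightarrow> 'v set \<Rightarrow> 'v set \<Rightarrow> 'v set set \<Rightarrow> nat \<Rightarrow>
   (('v \<Rightarrow> 'v option \<Rightarrow> real) \<times> ('v option \<Rightarrow> real)) set" where
  "F0 V Q R B E h = x_of V Q R B ` path_tuples V Q B E h"

definition total_cost ::
  "'v set \<Rightarrow> 'v set \<Rightarrow> real \<Rightarrow> real \<Rightarrow>
   ('v \<Rightarrow> 'v option \<Rightarrow> real) \<times> ('v option \<Rightarrow> real) \<Rightarrow> real" where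
  "total_cost R B cs cr y = (\<Sum>j\<in>aug_R R B. node_cost R cs cr j * snd y j)"

text \<open>Minimum of a cost over a set of vectors, +infinity over the empty set.\<close>

definition min_cost :: "('a \<Rightarrow> real) \<Rightarrow> 'a set \<Rightarrow> ereal" where
  "min_cost f S = (INF s\<in>S. ereal (f s))"

end

theory Submission
  imports Defs
begin

lemma succ_rtrancl:
  "successively (\<lambda>u v. (u,v)\<in>r) p \<Longrightarrow> p \<noteq> [] \<Longrightarrow> (hd p, last p) \<in> r\<^sup>*"
proof (induction p)
  case Nil then show ?case by simp
next
  case (Cons x xs)
  show ?case
  proof (cases "xs = []")
    case True then show ?thesis by simp
  next
    case False
    then have "(x, hd xs) \<in> r" "successively (\<lambda>u v. (u,v)\<in>r) xs"
      using Cons.prems by (auto simp: successively_Cons)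
    with Cons.IH False show ?thesis
      by (simp add: converse_rtrancl_into_rtrancl)
  qed
qed

lemma conn_of_path:
  assumes "p \<noteq> []" "set p \<subseteq> W" "\<forall>i. Suc i < length p \<longrightarrow> {p!i, p!Suc i} \<in> Ed"
  shows "connected_in Ed W (hd p) (last p)"
proof -
  have "successively (\<lambda>u v. (u,v) \<in> {(u,v). u\<in>W \<and> v\<in>W \<and> {u,v}\<in>Ed}) p"
    unfolding successively_conv_nth using assms
    by (auto intro: nth_mem[THEN subsetD[OF assms(2)]])
  from succ_rtrancl[OF this assms(1)] show ?thesis
    unfolding connected_in_def using assms(1,2) hd_in_set last_in_set by blast
qed

lemma path_of_rtrancl:
  "(a,b)\<in>r\<^sup>* \<Longrightarrow> \<exists>p. p\<noteq>[] \<and> hd p = a \<and> last p = b \<and> distinct p \<and>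
     set p \<subseteq> insert a (Range r) \<and> successively (\<lambda>u v. (u,v)\<in>r) p"
proof (induction rule: converse_rtrancl_induct)
  case base
  show ?case by (rule exI[of _ "[b]"]) simp
next
  case (step a y)
  then obtain p where p: "p\<noteq>[]" "hd p = y" "last p = b" "distinct p"
     "set p \<subseteq> insert y (Range r)" "successively (\<lambda>u v. (u,v)\<in>r) p" by blast
  have yR: "y \<in> Range r" using step(1) by blast
  show ?case
  proof (cases "a \<in> set p")
    case True
    then obtain us vs where uv: "p = us @ a # vs" by (meson split_list)
    show ?thesis
    proof (rule exI[of _ "a # vs"], intro conjI)
      show "last (a # vs) = b" using p(3) uv by simp
      show "distinct (a # vs)" using p(4) uv by simp
      show "set (a # vs) \<subseteq> insert a (Range r)" using p(5) uv yR by auto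
      show "successively (\<lambda>u v. (u, v) \<in> r) (a # vs)"
        using p(6) uv by (simp add: successively_append_iff)
    qed simp_all
  next
    case False
    show ?thesis
    proof (rule exI[of _ "a # p"], intro conjI)
      show "last (a # p) = b" using p by simp
      show "distinct (a # p)" using p False by simp
      show "set (a # p) \<subseteq> insert a (Range r)" using p(5) yR by auto
      show "successively (\<lambda>u v. (u, v) \<in> r) (a # p)"
        using p step(1) by (simp add: successively_Cons)
    qed simp_all
  qed
qed

lemma min_cut_exists:
  "finite C \<Longrightarrow> is_node_cut V E B k C \<Longrightarrow> \<exists>\<gamma>\<subseteq>C. \<gamma> \<in> min_node_cuts V E B k"
proof (induction "card C" arbitrary: C rule: less_induct)
  case less
  show ?case
  proof (cases "\<forall>\<gamma>'. \<gamma>' \<subset> C \<longrightarrow> \<not> is_node_cut V E B k \<gamma>'")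
    case True
    then show ?thesis using less.prems unfolding min_node_cuts_def by blast
  next
    case False
    then obtain g where g: "g \<subset> C" "is_node_cut V E B k g" by blast
    have "finite g" using g(1) less.prems(1) by (meson psubset_imp_subset rev_finite_subset)
    moreover have "card g < card C" using g(1) less.prems(1) by (simp add: psubset_card_mono)
    ultimately obtain \<gamma> where "\<gamma> \<subseteq> g" "\<gamma> \<in> min_node_cuts V E B k"
      using less.hyps g(2) by blast
    then show ?thesis using g(1) by blast
  qed
qed

lemma finite_augV: "finite V \<Longrightarrow> finite (aug_V V)"
  unfolding aug_V_def by simp

lemma dir1:
  assumes fin: "finite V" and QV: "Q \<subseteq> V" and g: "g \<in> path_tuples V Q B E h"
  shows "x_of V Q R B g \<in> ILP_feasible V Q R B E h"
proof -
  define xk where "xk = (\<lambda>k j. if k \<in> Q \<and> j \<in> aug_V V - {Some k, None} \<and> j \<in> set (g k)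
                       then 1 else 0 :: real)"
  define xv where "xv = (\<lambda>j. if j \<in> aug_R R B \<and> (\<exists>k\<in>Q. xk k j = 1) then 1 else (0::real))"
  have x: "x_of V Q R B g = (xk, xv)" unfolding x_of_def Let_def xk_def xv_def by simp
  have finA: "finite (aug_V V)" using fin by (rule finite_augV)
  have cut: "(\<Sum>j\<in>\<gamma>. xk k j) \<ge> 1" if k: "k \<in> Q" and gm: "\<gamma> \<in> min_node_cuts V E B k" for k \<gamma>
  proof -
    have c: "\<gamma> \<subseteq> aug_V V - {Some k, None}"
      "\<not> connected_in (aug_E E B) (aug_V V - \<gamma>) (Some k) None"
      using gm unfolding min_node_cuts_def is_node_cut_def by auto
    have p: "is_path (aug_V V) (aug_E E B) (g k) (Some k) None"
      using g k unfolding path_tuples_def hop_paths_def by auto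
    have "\<exists>j\<in>\<gamma>. j \<in> set (g k)"
    proof (rule ccontr)
      assume "\<not> ?thesis"
      then have "set (g k) \<subseteq> aug_V V - \<gamma>" using p unfolding is_path_def by auto
      then have "connected_in (aug_E E B) (aug_V V - \<gamma>) (hd (g k)) (last (g k))"
        using p unfolding is_path_def by (intro conn_of_path) auto
      then show False using c(2) p unfolding is_path_def by auto
    qed
    then obtain j where j: "j \<in> \<gamma>" "j \<in> set (g k)" by blast
    have "xk k j = 1" using j c(1) k unfolding xk_def by auto
    moreover have "finite \<gamma>" using c(1) finA by (meson finite_Diff rev_finite_subset)
    ultimately show ?thesis using member_le_sum[of j \<gamma> "xk k"] j(1)
      unfolding xk_def by auto
  qed
  have hop: "(\<Sum>j\<in>aug_V V - {Some k, None}. xk k j) \<le> real h" if k: "k \<in> Q" for k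
  proof -
    let ?A = "aug_V V - {Some k, None}"
    let ?p = "g k"
    have p: "is_path (aug_V V) (aug_E E B) ?p (Some k) None" "length ?p - 1 \<le> h + 1"
      using g k unfolding path_tuples_def hop_paths_def by auto
    have "(\<Sum>j\<in>?A. xk k j) = (\<Sum>j\<in>?A. if j \<in> set ?p then 1 else 0)"
      unfolding xk_def using k by (intro sum.cong) auto
    also have "\<dots> = (\<Sum>j\<in>{j\<in>?A. j \<in> set ?p}. 1)"
      using finA by (intro sum.inter_filter[symmetric]) auto
    also have "\<dots> = real (card {j\<in>?A. j \<in> set ?p})" by simp
    also have "card {j\<in>?A. j \<in> set ?p} \<le> card (set ?p - {Some k, None})"
      by (rule card_mono) (simp, blast)
    also have "card (set ?p - {Some k, None}) = length ?p - 2"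
    proof -
      have ne: "?p \<noteq> []" "hd ?p = Some k" "last ?p = None"
        using p(1) unfolding is_path_def by auto
      have "Some k \<in> set ?p" using hd_in_set[OF ne(1)] ne(2) by simp
      moreover have "None \<in> set ?p" using last_in_set[OF ne(1)] ne(3) by simp
      ultimately have "{Some k, None} \<subseteq> set ?p" by simp
      then have "card (set ?p - {Some k, None}) = card (set ?p) - card {Some k, None}"
        by (intro card_Diff_subset) auto
      then show ?thesis using p(1) unfolding is_path_def by (simp add: distinct_card)
    qed
    finally show ?thesis using p(2) by linarith
  qed
  show ?thesis unfolding x ILP_feasible_def
  proof (simp only: mem_Collect_eq case_prod_conv, intro conjI)
    show "\<forall>k j. \<not> (k \<in> Q \<and> j \<in> aug_V V - {Some k, None}) \<longrightarrow> xk k j = 0"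
      unfolding xk_def by auto
    show "\<forall>j. j \<notin> aug_R R B \<longrightarrow> xv j = 0" unfolding xv_def by auto
    show "\<forall>k\<in>Q. \<forall>\<gamma>\<in>min_node_cuts V E B k. 1 \<le> (\<Sum>j\<in>\<gamma>. xk k j)" using cut by blast
    show "\<forall>j\<in>aug_R R B. \<forall>k\<in>Q. xk k j \<le> xv j" unfolding xv_def xk_def by auto
    show "\<forall>k\<in>Q. (\<Sum>j\<in>aug_V V - {Some k, None}. xk k j) \<le> real h" using hop by blast
    show "\<forall>k\<in>Q. \<forall>j\<in>aug_V V - {Some k, None}. xk k j \<in> {0, 1}" unfolding xk_def by auto
    show "\<forall>j\<in>aug_R R B. xv j \<in> {0, 1}" unfolding xv_def by auto
  qed
qed



lemma path_for_k:
  assumes fin: "finite V" and kV: "k \<in> V" and y: "(yk, yv) \<in> ILP_feasible V Q R B E h"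
    and kQ: "k \<in> Q"
  shows "\<exists>p. p \<in> hop_paths V E B h k \<and>
     set p \<subseteq> insert (Some k) (insert None {j \<in> aug_V V - {Some k, None}. yk k j = 1})"
proof -
  let ?A = "aug_V V - {Some k, None}"
  define S where "S = {j \<in> ?A. yk k j = 1}"
  define W where "W = insert (Some k) (insert None S)"
  define rel where "rel = {(u, v). u \<in> W \<and> v \<in> W \<and> {u, v} \<in> aug_E E B}"
  have finA: "finite (aug_V V)" using fin by (rule finite_augV)
  have inV: "Some k \<in> aug_V V" "None \<in> aug_V V" using kV unfolding aug_V_def by auto
  have y01: "\<forall>j\<in>?A. yk k j \<in> {0, 1}" and ycut: "\<forall>\<gamma>\<in>min_node_cuts V E B k. (\<Sum>j\<in>\<gamma>. yk k j) \<ge> 1"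
    and ysum: "(\<Sum>j\<in>?A. yk k j) \<le> real h"
    using y kQ unfolding ILP_feasible_def by auto
  have conn: "connected_in (aug_E E B) W (Some k) None"
  proof (rule ccontr)
    assume nc: "\<not> ?thesis"
    define C where "C = ?A - S"
    have SA: "S \<subseteq> ?A" unfolding S_def by blast
    have eq: "aug_V V - C = W" unfolding C_def W_def using inV SA by blast
    have CA: "C \<subseteq> ?A" unfolding C_def by blast
    have ic: "is_node_cut V E B k C" unfolding is_node_cut_def using nc eq CA by simp
    have fC: "finite C" using CA finA by (meson finite_Diff rev_finite_subset)
    obtain \<gamma> where g: "\<gamma> \<subseteq> C" "\<gamma> \<in> min_node_cuts V E B k"
      using min_cut_exists[OF fC ic] by (elim exE conjE)
    have "(\<Sum>j\<in>\<gamma>. yk k j) = (\<Sum>j\<in>\<gamma>. 0)"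
    proof (rule sum.cong)
      fix j assume "j \<in> \<gamma>"
      then have "j \<in> ?A" "j \<notin> S" using g(1) unfolding C_def by auto
      then show "yk k j = 0" using y01 unfolding S_def by auto
    qed simp
    then show False using ycut g(2) by auto
  qed
  then have "(Some k, None) \<in> rel\<^sup>*" unfolding connected_in_def rel_def by blast
  from path_of_rtrancl[OF this] obtain p where p: "p\<noteq>[]" "hd p = Some k" "last p = None"
    "distinct p" "set p \<subseteq> insert (Some k) (Range rel)" "successively (\<lambda>u v. (u,v)\<in>rel) p"
    by blast
  have setW: "set p \<subseteq> W" using p(5) unfolding rel_def W_def by auto
  have WA: "W \<subseteq> aug_V V" unfolding W_def S_def using inV by auto
  have succ: "successively (\<lambda>u v. {u,v} \<in> aug_E E B) p"
    using p(6) by (rule successively_mono) (auto simp: rel_def)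
  have finS: "finite S" unfolding S_def using finA by simp
  have "real (card S) = (\<Sum>j\<in>S. yk k j)" unfolding S_def by simp
  also have "\<dots> \<le> (\<Sum>j\<in>?A. yk k j)"
  proof (rule sum_mono2)
    show "finite ?A" using finA by blast
    show "S \<subseteq> ?A" unfolding S_def by blast
    fix b assume "b \<in> ?A - S"
    then have "b \<in> ?A" by blast
    then have "yk k b \<in> {0, 1}" using y01 by blast
    then show "0 \<le> yk k b" by auto
  qed
  finally have cS: "card S \<le> h" using ysum by linarith
  have "length p = card (set p)" using p(4) by (simp add: distinct_card)
  also have "\<dots> \<le> card W"
    by (rule card_mono) (simp add: W_def finS, rule setW)
  also have "\<dots> \<le> card S + 2" unfolding W_def using finS by (simp add: card_insert_if)
  finally have len: "length p - 1 \<le> h + 1" using cS by linarith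
  have "\<forall>i. Suc i < length p \<longrightarrow> {p ! i, p ! Suc i} \<in> aug_E E B"
    using succ unfolding successively_conv_nth .
  moreover have "set p \<subseteq> aug_V V" using setW WA by (rule subset_trans)
  ultimately have "p \<in> hop_paths V E B h k"
    unfolding hop_paths_def is_path_def using p(1-4) len by simp
  moreover have "set p \<subseteq> insert (Some k) (insert None {j \<in> ?A. yk k j = 1})"
    using setW unfolding W_def S_def .
  ultimately show ?thesis by blast
qed

lemma dir2:
  assumes fin: "finite V" and QV: "Q \<subseteq> V" and y: "y \<in> ILP_feasible V Q R B E h"
    and cs: "cs \<ge> 0" and cr: "cr \<ge> 0"
  shows "\<exists>x\<in>F0 V Q R B E h. total_cost R B cs cr x \<le> total_cost R B cs cr y"
proof -
  obtain yk yv where yy: "y = (yk, yv)" by (cases y)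
  define P where "P = (\<lambda>k p. p \<in> hop_paths V E B h k \<and>
     set p \<subseteq> insert (Some k) (insert None {j \<in> aug_V V - {Some k, None}. yk k j = 1}))"
  define g where "g = (\<lambda>k. SOME p. P k p)"
  have gP: "P k (g k)" if kQ: "k \<in> Q" for k
  proof -
    have kV: "k \<in> V" using QV kQ by (rule subsetD)
    have ex: "\<exists>p. P k p" unfolding P_def by (rule path_for_k[OF fin kV y[unfolded yy] kQ])
    show ?thesis unfolding g_def by (rule someI_ex[OF ex])
  qed
  have gt: "g \<in> path_tuples V Q B E h" unfolding path_tuples_def
  proof (rule CollectI, rule ballI)
    fix k assume "k \<in> Q"
    from gP[OF this] show "g k \<in> hop_paths V E B h k" unfolding P_def by (rule conjunct1)
  qed
  define xk where "xk = (\<lambda>k j. if k \<in> Q \<and> j \<in> aug_V V - {Some k, None} \<and> j \<in> set (g k)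
                       then 1 else 0 :: real)"
  define xv where "xv = (\<lambda>j. if j \<in> aug_R R B \<and> (\<exists>k\<in>Q. xk k j = 1) then 1 else (0::real))"
  have x: "x_of V Q R B g = (xk, xv)" unfolding x_of_def Let_def xk_def xv_def by simp
  have yv01: "\<forall>j\<in>aug_R R B. yv j \<in> {0, 1}" and yvk: "\<forall>j\<in>aug_R R B. \<forall>k\<in>Q. yv j \<ge> yk k j"
    using y unfolding yy ILP_feasible_def by auto
  have le: "xv j \<le> yv j" if j: "j \<in> aug_R R B" for j
  proof (cases "\<exists>k\<in>Q. xk k j = 1")
    case True
    then obtain k where k: "k \<in> Q" "xk k j = 1" by blast
    then have "j \<in> aug_V V - {Some k, None}" "j \<in> set (g k)" unfolding xk_def
      by (auto split: if_splits)
    then have "yk k j = 1" using gP[OF k(1)] unfolding P_def by auto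
    then show ?thesis using yvk j k(1) unfolding xv_def by fastforce
  next
    case False
    then show ?thesis using yv01 j unfolding xv_def by auto
  qed
  have "total_cost R B cs cr (xk, xv) \<le> total_cost R B cs cr y"
    unfolding total_cost_def yy snd_conv
  proof (rule sum_mono)
    fix j assume "j \<in> aug_R R B"
    moreover have "node_cost R cs cr j \<ge> 0" unfolding node_cost_def using cs cr by auto
    ultimately show "node_cost R cs cr j * xv j \<le> node_cost R cs cr j * yv j"
      using le by (simp add: mult_left_mono)
  qed
  moreover have "(xk, xv) \<in> F0 V Q R B E h" unfolding F0_def by (rule image_eqI[where f="x_of V Q R B", OF x[symmetric] gt])
  ultimately show ?thesis by blast
qed

theorem theorem4:
  fixes V Q R B :: "'v set" and E :: "'v set set" and h :: nat and cs cr :: real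
  assumes "finite V"
    and "V = Q \<union> R \<union> B"
    and "Q \<inter> R = {}" and "Q \<inter> B = {}" and "R \<inter> B = {}"
    and "\<forall>e\<in>E. \<exists>u v. e = {u, v} \<and> u \<in> V \<and> v \<in> V \<and> u \<noteq> v"
    and "h > 0" and "cs \<ge> 0" and "cr \<ge> 0"
  shows "min_cost (total_cost R B cs cr) (ILP_feasible V Q R B E h)
       = min_cost (total_cost R B cs cr) (F0 V Q R B E h)"
proof -
  have QV: "Q \<subseteq> V" using assms(2) by blast
  have sub: "F0 V Q R B E h \<subseteq> ILP_feasible V Q R B E h"
    unfolding F0_def using dir1[OF assms(1) QV] by blast
  show ?thesis unfolding min_cost_def
  proof (rule antisym)
    show "(INF s\<in>ILP_feasible V Q R B E h. ereal (total_cost R B cs cr s))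
        \<le> (INF s\<in>F0 V Q R B E h. ereal (total_cost R B cs cr s))"
      using sub by (rule INF_superset_mono) simp
    show "(INF s\<in>F0 V Q R B E h. ereal (total_cost R B cs cr s))
        \<le> (INF s\<in>ILP_feasible V Q R B E h. ereal (total_cost R B cs cr s))"
      by (rule INF_mono) (use dir2[OF assms(1) QV _ assms(8,9)] in auto)
  qed
qed

end
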